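(* The InDC-BE method with $M$ uniform quadrature nodes excluding the left-most point and $K$ correction steps is an implicit Runge–Kutta method (with $(K+1)M$ stages) which is stiffly accurate and whose coefficient matrix $A$ in the Butcher tableau is invertible. In particular, for $K=1$ (normalizing the time step to $1$), $$A=\begin{pmatrix}T&Z\\P&T\end{pmatrix},$$ where $Z$ is the $M\times M$ zero matrix, $T$ is the $M\times M$ matrix with $T_{ij}=1/M$ for $j\le i$ and $T_{ij}=0$ for $j>i$, and $P_{ij}=\tilde S_{ij}-\frac1M$ for $j\le i$, $P_{ij}=\tilde S_{ij}$ for $j>i$.
   Context: InDC-BE for an ODE $y'=f(y)$ over one step of size $H$: nodes $\tau_m=t_n+mh$, $h=H/M$; $\alpha_j$ ($j=1,\dots,M$) the Lagrange basis polynomials of degree $M-1$ for $\tau_1,\dots,\tau_M$; $S^m(\bar w)=\frac1h\sum_jw_j\int_{\tau_m}^{\tau_{m+1}}\alpha_j$. Prediction: $y^{(0)}_{m+1}=y^{(0)}_m+hf(y^{(0)}_{m+1})$; correction: $y^{(k)}_{m+1}=y^{(k)}_m+h[f(y^{(k)}_{m+1})-f(y^{(k-1)}_{m+1})]+hS^m((f(y^{(k-1)}_j))_{j=1}^M)$, with $y^{(k)}_0=y_n$, output $y_{n+1}=y^{(K)}_M$. Viewed as an RK method, the stages are the values $y^{(k)}_m$, $k=0,\dots,K$, $m=1,\dots,M$. A RK method is stiffly accurate if $b^T$ equals the last row of $A$. $\tilde S_{ij}=\int_0^{i/M}\ell_j(s)\,ds$ where $\ell_j$ are the Lagrange basis polynomials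 of degree $M-1$ for the nodes $1/M,2/M,\dots,1$. *)

theory Defs
  imports "HOL-Analysis.Analysis"
begin

definition lagrange_basis :: "nat \<Rightarrow> (nat \<Rightarrow> real) \<Rightarrow> nat \<Rightarrow> real \<Rightarrow> real" where
  "lagrange_basis M x j t = (\<Prod>i\<in>{1..M} - {j}. (t - x i) / (x j - x i))"

definition indc_S :: "nat \<Rightarrow> real \<Rightarrow> real \<Rightarrow> nat \<Rightarrow> (nat \<Rightarrow> 'a::real_vector) \<Rightarrow> 'a" where
  "indc_S M tn H m w =
     (let h = H / real M; tau = (\<lambda>i. tn + real i * h) in
      (1 / h) *\<^sub>R (\<Sum>j\<in>{1..M}. integral {tau m..tau (Suc m)} (lagrange_basis M tau j) *\<^sub>R w j))"

text \<open>Y k m for k in 0..K, m in 0..M are the InDC-BE values y^(k)_m; these are the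
  defining (implicit) equations of one InDC-BE step with data y_n.\<close>
definition indc_be_step :: "nat \<Rightarrow> nat \<Rightarrow> ('a::real_vector \<Rightarrow> 'a) \<Rightarrow> real \<Rightarrow> real \<Rightarrow> 'a \<Rightarrow> (nat \<Rightarrow> nat \<Rightarrow> 'a) \<Rightarrow> bool" where
  "indc_be_step M K f tn H yn Y \<longleftrightarrow>
     (let h = H / real M in
       (\<forall>k\<le>K. Y k 0 = yn) \<and>
       (\<forall>m<M. Y 0 (Suc m) = Y 0 m + h *\<^sub>R f (Y 0 (Suc m))) \<and>
       (\<forall>k\<in>{1..K}. \<forall>m<M.
          Y k (Suc m) = Y k m + h *\<^sub>R (f (Y k (Suc m)) - f (Y (k - 1) (Suc m)))
                        + h *\<^sub>R indc_S M tn H m (\<lambda>j. f (Y (k - 1) j))))"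

text \<open>Stage numbering: the stage y^(k)_m (k = 0..K, m = 1..M) is stage number k*M + (m-1),
  so stages are indexed by 0..(K+1)M-1.  Matrices are functions nat => nat => real,
  used only on indices below the size N.\<close>

definition rk_stiffly_accurate :: "nat \<Rightarrow> (nat \<Rightarrow> nat \<Rightarrow> real) \<Rightarrow> (nat \<Rightarrow> real) \<Rightarrow> bool" where
  "rk_stiffly_accurate N A b \<longleftrightarrow> (\<forall>j<N. b j = A (N - 1) j)"

definition mat_invertible :: "nat \<Rightarrow> (nat \<Rightarrow> nat \<Rightarrow> real) \<Rightarrow> bool" where
  "mat_invertible N A \<longleftrightarrow>
     (\<exists>B :: nat \<Rightarrow> nat \<Rightarrow> real. \<forall>i<N. \<forall>j<N.
        (\<Sum>l<N. A i l * B l j) = (if i = j then 1 else 0) \<and>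
        (\<Sum>l<N. B i l * A l j) = (if i = j then 1 else 0))"

definition S_tilde :: "nat \<Rightarrow> nat \<Rightarrow> nat \<Rightarrow> real" where
  "S_tilde M i j = integral {0..real i / real M} (lagrange_basis M (\<lambda>l. real l / real M) j)"

text \<open>The 2M x 2M matrix [[T, Z], [P, T]] of the statement, with 0-based indices.\<close>
definition T_mat :: "nat \<Rightarrow> nat \<Rightarrow> nat \<Rightarrow> real" where
  "T_mat M i j = (if j \<le> i then 1 / real M else 0)"

definition P_mat :: "nat \<Rightarrow> nat \<Rightarrow> nat \<Rightarrow> real" where
  "P_mat M i j = S_tilde M (Suc i) (Suc j) - (if j \<le> i then 1 / real M else 0)"

definition block_A1 :: "nat \<Rightarrow> nat \<Rightarrow> nat \<Rightarrow> real" where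
  "block_A1 M i j =
     (if i < M then (if j < M then T_mat M i j else 0)
      else (if j < M then P_mat M (i - M) j else T_mat M (i - M) (j - M)))"

end

theory Submission
  imports Defs "Jordan_Normal_Form.Determinant"
begin


lemma lower_tri_invertible:
  fixes A :: "nat \<Rightarrow> nat \<Rightarrow> real"
  assumes lt: "\<And>i j. i < j \<Longrightarrow> j < N \<Longrightarrow> A i j = 0"
    and dg: "\<And>i. i < N \<Longrightarrow> A i i \<noteq> 0"
  shows "mat_invertible N A"
proof -
  define Am where "Am = Matrix.mat N N (\<lambda>(i,j). A i j)"
  have Ac: "Am \<in> carrier_mat N N" unfolding Am_def by simp
  have "Determinant.det Am = prod_list (diag_mat Am)"
    by (rule det_lower_triangular[OF _ Ac]) (simp add: Am_def lt)
  also have "\<dots> \<noteq> 0"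
    using dg by (auto simp: prod_list_zero_iff diag_mat_def Am_def)
  finally have "Determinant.det Am \<noteq> 0" .
  from det_non_zero_imp_unit[OF Ac this, of "()"]
  obtain B where B: "B \<in> carrier_mat N N" "B * Am = 1\<^sub>m N" "Am * B = 1\<^sub>m N"
    unfolding Units_def ring_mat_def by auto
  show ?thesis unfolding mat_invertible_def
  proof (intro exI[of _ "\<lambda>i j. B $$ (i,j)"] allI impI conjI)
    fix i j assume ij: "i < N" "j < N"
    have "(Am * B) $$ (i,j) = (\<Sum>l<N. A i l * B $$ (l, j))"
      using ij B(1) by (simp add: Am_def scalar_prod_def lessThan_atLeast0)
    then show "(\<Sum>l<N. A i l * B $$ (l, j)) = (if i = j then 1 else 0)"
      using B(3) ij by simp
    have "(B * Am) $$ (i,j) = (\<Sum>l<N. B $$ (i,l) * A l j)"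
      using ij B(1) by (simp add: Am_def scalar_prod_def lessThan_atLeast0)
    then show "(\<Sum>l<N. B $$ (i, l) * A l j) = (if i = j then 1 else 0)"
      using B(2) ij by simp
  qed
qed


lemma seq_equiv:
  fixes y g :: "nat \<Rightarrow> real"
  assumes "y 0 = c"
  shows "(\<forall>m<M. y (Suc m) = y m + g m) \<longleftrightarrow> (\<forall>m<M. y (Suc m) = c + (\<Sum>m'\<le>m. g m'))"
proof (induction M)
  case 0 then show ?case by simp
next
  case (Suc M)
  have yM: "y M = c + (\<Sum>m'<M. g m')" if "\<forall>m<M. y (Suc m) = y m + g m" 
    using that
  proof (induction M)
    case 0 then show ?case using assms by simp
  next
    case (Suc M) then show ?case by simp
  qed
  have yM': "y M = c + (\<Sum>m'<M. g m')" if "\<forall>m<M. y (Suc m) = c + (\<Sum>m'\<le>m. g m')" 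
  proof (cases M)
    case 0 then show ?thesis using assms by simp
  next
    case (Suc n) then show ?thesis using that by (simp add: lessThan_Suc_atMost)
  qed
  show ?case
  proof
    assume h: "\<forall>m<Suc M. y (Suc m) = y m + g m"
    then have "\<forall>m<M. y (Suc m) = c + (\<Sum>m'\<le>m. g m')" using Suc by auto
    moreover have "y (Suc M) = c + (\<Sum>m'\<le>M. g m')"
      using h yM[of] h by (simp add: lessThan_Suc_atMost[symmetric])
    ultimately show "\<forall>m<Suc M. y (Suc m) = c + (\<Sum>m'\<le>m. g m')" using less_Suc_eq by auto
  next
    assume h: "\<forall>m<Suc M. y (Suc m) = c + (\<Sum>m'\<le>m. g m')"
    then have "\<forall>m<M. y (Suc m) = y m + g m" using Suc by auto
    moreover have "y (Suc M) = y M + g M"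
      using h yM'[of] h by (simp add: lessThan_Suc_atMost[symmetric])
    ultimately show "\<forall>m<Suc M. y (Suc m) = y m + g m" using less_Suc_eq by auto
  qed
qed

lemma lagrange_scale:
  assumes H: "H \<noteq> 0" and M: "M \<ge> 1"
  shows "lagrange_basis M (\<lambda>i. tn + real i * (H / real M)) j (tn + H * s)
       = lagrange_basis M (\<lambda>l. real l / real M) j s"
  unfolding lagrange_basis_def
proof (rule prod.cong[OF refl])
  fix i
  have Mn: "real M \<noteq> 0" using M by simp
  have "tn + H * s - (tn + real i * (H / real M)) = H * (s - real i / real M)"
    by (simp add: field_simps)
  moreover have "tn + real j * (H / real M) - (tn + real i * (H / real M)) = H * (real j / real M - real i / real M)"
    by (simp add: field_simps)
  ultimately show "(tn + H * s - (tn + real i * (H / real M))) /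
          (tn + real j * (H / real M) - (tn + real i * (H / real M))) =
          (s - real i / real M) / (real j / real M - real i / real M)"
    using H by simp
qed

lemma lagrange_cont: "continuous_on S (lagrange_basis M x j)"
  unfolding lagrange_basis_def divide_inverse
  by (intro continuous_on_prod continuous_on_mult_right continuous_on_diff continuous_on_id continuous_on_const)

lemma integral_scale:
  assumes H: "H > 0" and M: "M \<ge> 1" and b: "b \<ge> 0"
  shows "integral {tn..tn + H * b} (lagrange_basis M (\<lambda>i. tn + real i * (H / real M)) j)
       = H * integral {0..b} (lagrange_basis M (\<lambda>l. real l / real M) j)"
proof -
  let ?f = "lagrange_basis M (\<lambda>i. tn + real i * (H / real M)) j"
  let ?g = "\<lambda>s. tn + H * s"
  have "((\<lambda>s. H *\<^sub>R ?f (?g s)) has_integral (integral {?g 0..?g b} ?f)) {0..b}"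
  proof (rule has_integral_substitution[where c = tn and d = "tn + H * b"])
    show "?g ` {0..b} \<subseteq> {tn..tn + H * b}" using H by (auto intro: mult_left_mono)
    show "continuous_on {tn..tn + H * b} ?f" by (rule lagrange_cont)
    fix x show "(?g has_field_derivative H) (at x within {0..b})"
      by (auto intro!: derivative_eq_intros)
  qed (use b H in auto)
  then have "((\<lambda>s. H * lagrange_basis M (\<lambda>l. real l / real M) j s) has_integral (integral {tn..tn + H * b} ?f)) {0..b}"
    using lagrange_scale[of H M tn j] H M by simp
  then have "integral {tn..tn + H * b} ?f = integral {0..b} (\<lambda>s. H * lagrange_basis M (\<lambda>l. real l / real M) j s)"
    by (simp add: has_integral_iff)
  then show ?thesis by simp
qed

lemma integral_pieces:
  fixes tau :: "nat \<Rightarrow> real" and g :: "real \<Rightarrow> real"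
  assumes mono: "\<And>i. tau i \<le> tau (Suc i)"
    and cont: "\<And>S. continuous_on S g"
  shows "(\<Sum>m'\<le>m. integral {tau m'..tau (Suc m')} g) = integral {tau 0..tau (Suc m)} g"
proof (induction m)
  case 0 then show ?case by simp
next
  case (Suc m)
  have le: "tau 0 \<le> tau (Suc m)"
    using mono by (induction m) (auto intro: order_trans)
  have "integral {tau 0..tau (Suc m)} g + integral {tau (Suc m)..tau (Suc (Suc m))} g
        = integral {tau 0..tau (Suc (Suc m))} g"
    by (rule Henstock_Kurzweil_Integration.integral_combine[OF le mono integrable_continuous_real[OF cont]])
  then show ?case using Suc by simp
qed

lemma sum_shift1: "(\<Sum>m<M. x (Suc m)) = sum x {1..M}"
  by (induction M) (auto simp: atLeastAtMostSuc_conv add.commute)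



definition Amat :: "nat \<Rightarrow> nat \<Rightarrow> nat \<Rightarrow> real" where
  "Amat M r c = (if c div M = r div M \<and> c mod M \<le> r mod M then 1 / real M else 0)
     + (if 0 < r div M \<and> c div M = r div M - 1
        then S_tilde M (Suc (r mod M)) (Suc (c mod M)) - (if c mod M \<le> r mod M then 1 / real M else 0)
        else 0)"

lemma Amat_at:
  assumes "m < M" "m' < M"
  shows "Amat M (k*M+m) (k'*M+m') = (if k' = k \<and> m' \<le> m then 1 / real M else 0)
     + (if 0 < k \<and> k' = k - 1
        then S_tilde M (Suc m) (Suc m') - (if m' \<le> m then 1 / real M else 0) else 0)"
  using assms by (simp add: Amat_def)

lemma sum_if_le:
  fixes c :: real and x :: "nat \<Rightarrow> real"
  assumes "m < M"
  shows "(\<Sum>m'<M. (if m' \<le> m then c else 0) * x m') = c * (\<Sum>m'\<le>m. x m')"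
proof -
  have "(\<Sum>m'<M. (if m' \<le> m then c else 0) * x m') = (\<Sum>m'<M. if m' \<le> m then c * x m' else 0)"
    by (intro sum.cong) auto
  also have "\<dots> = (\<Sum>m'\<in>{m'\<in>{..<M}. m' \<le> m}. c * x m')"
    by (subst sum.inter_filter) auto
  also have "{m'\<in>{..<M}. m' \<le> m} = {..m}" using assms by auto
  finally show ?thesis by (simp add: sum_distrib_left)
qed

lemma Asum:
  fixes F :: "nat \<Rightarrow> nat \<Rightarrow> real"
  assumes "k \<le> K" "m < M"
  shows "(\<Sum>k'\<le>K. \<Sum>m'<M. Amat M (k*M+m) (k'*M+m') * F k' m')
     = (1 / real M) * (\<Sum>m'\<le>m. F k m')
       + (if 0 < k then (\<Sum>m'<M. S_tilde M (Suc m) (Suc m') * F (k-1) m') - (1 / real M) * (\<Sum>m'\<le>m. F (k-1) m') else 0)"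
proof -
  have "(\<Sum>k'\<le>K. \<Sum>m'<M. Amat M (k*M+m) (k'*M+m') * F k' m')
    = (\<Sum>k'\<le>K. (if k' = k then (\<Sum>m'<M. (if m' \<le> m then 1 / real M else 0) * F k m') else 0)
        + (if 0 < k \<and> k' = k - 1 then (\<Sum>m'<M. S_tilde M (Suc m) (Suc m') * F (k-1) m')
             - (\<Sum>m'<M. (if m' \<le> m then 1 / real M else 0) * F (k-1) m') else 0))"
  proof (intro sum.cong refl)
    fix k' assume "k' \<in> {..K}"
    show "(\<Sum>m'<M. Amat M (k*M+m) (k'*M+m') * F k' m') = 
      (if k' = k then (\<Sum>m'<M. (if m' \<le> m then 1 / real M else 0) * F k m') else 0)
        + (if 0 < k \<and> k' = k - 1 then (\<Sum>m'<M. S_tilde M (Suc m) (Suc m') * F (k-1) m')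
             - (\<Sum>m'<M. (if m' \<le> m then 1 / real M else 0) * F (k-1) m') else 0)"
      using assms(2)
      by (auto simp: Amat_at distrib_right sum.distrib left_diff_distrib sum_subtractf intro!: sum.cong)
  qed
  also have "\<dots> = (\<Sum>m'<M. (if m' \<le> m then 1 / real M else 0) * F k m')
     + (if 0 < k then (\<Sum>m'<M. S_tilde M (Suc m) (Suc m') * F (k-1) m')
             - (\<Sum>m'<M. (if m' \<le> m then 1 / real M else 0) * F (k-1) m') else 0)"
    using assms(1) by (simp add: sum.distrib)
  finally show ?thesis using assms(2) by (simp add: sum_if_le)
qed

lemma Ssum:
  assumes H: "H > 0" and M: "M \<ge> 1"
  shows "(\<Sum>m'\<le>m. H / real M * indc_S M tn H m' w)
     = H * (\<Sum>m'<M. S_tilde M (Suc m) (Suc m') * w (Suc m'))"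
proof -
  define tau where "tau = (\<lambda>i. tn + real i * (H / real M))"
  have hn: "H / real M \<noteq> 0" using H M by simp
  have "(\<Sum>m'\<le>m. H / real M * indc_S M tn H m' w)
      = (\<Sum>m'\<le>m. \<Sum>j\<in>{1..M}. integral {tau m'..tau (Suc m')} (lagrange_basis M tau j) * w j)"
    using hn by (simp add: indc_S_def tau_def Let_def)
  also have "\<dots> = (\<Sum>j\<in>{1..M}. (\<Sum>m'\<le>m. integral {tau m'..tau (Suc m')} (lagrange_basis M tau j)) * w j)"
    by (subst sum.swap) (simp add: sum_distrib_right)
  also have "\<dots> = (\<Sum>j\<in>{1..M}. integral {tau 0..tau (Suc m)} (lagrange_basis M tau j) * w j)"
  proof -
    have mono: "tau i \<le> tau (Suc i)" for i using H M by (simp add: tau_def field_simps)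
    show ?thesis by (simp add: integral_pieces[where tau=tau, OF mono lagrange_cont])
  qed
  also have "\<dots> = (\<Sum>j\<in>{1..M}. H * S_tilde M (Suc m) j * w j)"
  proof (intro sum.cong refl)
    fix j
    have t0: "tau 0 = tn" and t1: "tau (Suc m) = tn + H * (real (Suc m) / real M)"
      by (simp_all add: tau_def)
    show "integral {tau 0..tau (Suc m)} (lagrange_basis M tau j) * w j = H * S_tilde M (Suc m) j * w j"
    proof -
      have "integral {tn..tn + H * (real (Suc m) / real M)} (lagrange_basis M tau j) = H * S_tilde M (Suc m) j"
        unfolding S_tilde_def tau_def by (rule integral_scale[OF H M]) simp
      then show ?thesis by (simp only: t0 t1)
    qed
  qed
  also have "\<dots> = H * (\<Sum>m'<M. S_tilde M (Suc m) (Suc m') * w (Suc m'))"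
    by (subst sum_shift1[symmetric]) (simp add: sum_distrib_left mult.assoc)
  finally show ?thesis .
qed



lemma all_le_split: fixes K :: nat shows "(\<forall>k\<le>K. P k) \<longleftrightarrow> P 0 \<and> (\<forall>k\<in>{1..K}. P k)"
proof
  assume "\<forall>k\<le>K. P k" then show "P 0 \<and> (\<forall>k\<in>{1..K}. P k)" by auto
next
  assume h: "P 0 \<and> (\<forall>k\<in>{1..K}. P k)"
  show "\<forall>k\<le>K. P k"
  proof (intro allI impI)
    fix k assume "k \<le> K" then show "P k" using h by (cases k) auto
  qed
qed

theorem proposition4p1:
  fixes M K :: nat
  assumes "M \<ge> 1"
  shows "\<exists>(A :: nat \<Rightarrow> nat \<Rightarrow> real) (b :: nat \<Rightarrow> real).
     (\<forall>(f :: real \<Rightarrow> real) tn H yn (Y :: nat \<Rightarrow> nat \<Rightarrow> real). H > 0 \<longrightarrow>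
        indc_be_step M K f tn H yn Y \<longleftrightarrow>
          ((\<forall>k\<le>K. Y k 0 = yn) \<and>
           (\<forall>k\<le>K. \<forall>m<M. Y k (Suc m) =
               yn + H * (\<Sum>k'\<le>K. \<Sum>m'<M. A (k * M + m) (k' * M + m') * f (Y k' (Suc m'))))) \<and>
        (indc_be_step M K f tn H yn Y \<longrightarrow>
           Y K M = yn + H * (\<Sum>k'\<le>K. \<Sum>m'<M. b (k' * M + m') * f (Y k' (Suc m'))))) \<and>
     rk_stiffly_accurate ((K + 1) * M) A b \<and>
     mat_invertible ((K + 1) * M) A \<and>
     (K = 1 \<longrightarrow> (\<forall>i < 2 * M. \<forall>j < 2 * M. A i j = block_A1 M i j))"
proof -
  have M: "M \<ge> 1" by fact
  define A where "A = Amat M"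
  define b where "b = (\<lambda>c. A ((K + 1) * M - 1) c)"
  have main: "indc_be_step M K f tn H yn Y \<longleftrightarrow>
          ((\<forall>k\<le>K. Y k 0 = yn) \<and>
           (\<forall>k\<le>K. \<forall>m<M. Y k (Suc m) =
               yn + H * (\<Sum>k'\<le>K. \<Sum>m'<M. A (k * M + m) (k' * M + m') * f (Y k' (Suc m')))))"
    if H: "H > 0" for f :: "real \<Rightarrow> real" and tn H yn and Y :: "nat \<Rightarrow> nat \<Rightarrow> real"
  proof -
    define h where "h = H / real M"
    define G where "G = (\<lambda>k m. if k = 0 then h * f (Y 0 (Suc m))
        else h * (f (Y k (Suc m)) - f (Y (k-1) (Suc m))) + h * indc_S M tn H m (\<lambda>j. f (Y (k-1) j)))"
    have E1: "indc_be_step M K f tn H yn Y \<longleftrightarrow>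
       (\<forall>k\<le>K. Y k 0 = yn) \<and> (\<forall>k\<le>K. \<forall>m<M. Y k (Suc m) = Y k m + G k m)"
    proof -
      have s1: "(\<forall>k\<le>K. \<forall>m<M. Y k (Suc m) = Y k m + G k m) \<longleftrightarrow> (\<forall>m<M. Y 0 (Suc m) = Y 0 m + G 0 m)
         \<and> (\<forall>k\<in>{1..K}. \<forall>m<M. Y k (Suc m) = Y k m + G k m)" by (rule all_le_split)
      show ?thesis unfolding indc_be_step_def Let_def s1
        by (simp add: G_def h_def add.assoc)
    qed
    have E2: "H * (\<Sum>k'\<le>K. \<Sum>m'<M. A (k * M + m) (k' * M + m') * f (Y k' (Suc m')))
        = (\<Sum>m'\<le>m. G k m')" if km: "k \<le> K" "m < M" for k m
    proof -
      have "H * (\<Sum>k'\<le>K. \<Sum>m'<M. A (k * M + m) (k' * M + m') * f (Y k' (Suc m')))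
        = H * ((1 / real M) * (\<Sum>m'\<le>m. f (Y k (Suc m')))
       + (if 0 < k then (\<Sum>m'<M. S_tilde M (Suc m) (Suc m') * f (Y (k-1) (Suc m'))) - (1 / real M) * (\<Sum>m'\<le>m. f (Y (k-1) (Suc m'))) else 0))"
        unfolding A_def using Asum[OF km, of "\<lambda>k' m'. f (Y k' (Suc m'))"] by simp
      also have "\<dots> = (\<Sum>m'\<le>m. G k m')"
      proof (cases "k = 0")
        case True then show ?thesis by (simp add: G_def h_def sum_distrib_left)
      next
        case False
        have "(\<Sum>m'\<le>m. G k m') = h * (\<Sum>m'\<le>m. f (Y k (Suc m'))) - h * (\<Sum>m'\<le>m. f (Y (k-1) (Suc m')))
            + (\<Sum>m'\<le>m. H / real M * indc_S M tn H m' (\<lambda>j. f (Y (k-1) j)))"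
          using False by (simp add: G_def h_def sum.distrib sum_distrib_left sum_subtractf right_diff_distrib)
        also have "\<dots> = h * (\<Sum>m'\<le>m. f (Y k (Suc m'))) - h * (\<Sum>m'\<le>m. f (Y (k-1) (Suc m')))
            + H * (\<Sum>m'<M. S_tilde M (Suc m) (Suc m') * f (Y (k-1) (Suc m')))"
          using Ssum[OF H M, where m=m and tn=tn and w="\<lambda>j. f (Y (k-1) j)"] by simp
        finally show ?thesis using False by (simp add: h_def algebra_simps)
      qed
      finally show ?thesis .
    qed
    have RK: "(\<forall>k\<le>K. \<forall>m<M. Y k (Suc m) =
               yn + H * (\<Sum>k'\<le>K. \<Sum>m'<M. A (k * M + m) (k' * M + m') * f (Y k' (Suc m'))))
        \<longleftrightarrow> (\<forall>k\<le>K. \<forall>m<M. Y k (Suc m) = yn + (\<Sum>m'\<le>m. G k m'))"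
      using E2 by auto
    show ?thesis
    proof
      assume "indc_be_step M K f tn H yn Y"
      then have z: "\<forall>k\<le>K. Y k 0 = yn" and r: "\<forall>k\<le>K. \<forall>m<M. Y k (Suc m) = Y k m + G k m"
        using E1 by auto
      have "\<forall>k\<le>K. \<forall>m<M. Y k (Suc m) = yn + (\<Sum>m'\<le>m. G k m')"
        using z r seq_equiv[of "Y k" yn M "G k" for k] by blast
      then show "(\<forall>k\<le>K. Y k 0 = yn) \<and>
           (\<forall>k\<le>K. \<forall>m<M. Y k (Suc m) =
               yn + H * (\<Sum>k'\<le>K. \<Sum>m'<M. A (k * M + m) (k' * M + m') * f (Y k' (Suc m'))))"
        using z RK by blast
    next
      assume a: "(\<forall>k\<le>K. Y k 0 = yn) \<and>
           (\<forall>k\<le>K. \<forall>m<M. Y k (Suc m) =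
               yn + H * (\<Sum>k'\<le>K. \<Sum>m'<M. A (k * M + m) (k' * M + m') * f (Y k' (Suc m'))))"
      then have z: "\<forall>k\<le>K. Y k 0 = yn" and r: "\<forall>k\<le>K. \<forall>m<M. Y k (Suc m) = yn + (\<Sum>m'\<le>m. G k m')"
        using RK by auto
      have "\<forall>k\<le>K. \<forall>m<M. Y k (Suc m) = Y k m + G k m"
        using z r seq_equiv[of "Y k" yn M "G k" for k] by blast
      then show "indc_be_step M K f tn H yn Y" using E1 z by blast
    qed
  qed
  have idx: "K * M + (M - 1) = (K + 1) * M - 1" using M by (simp add: algebra_simps)
  have part1: "\<forall>(f :: real \<Rightarrow> real) tn H yn (Y :: nat \<Rightarrow> nat \<Rightarrow> real). H > 0 \<longrightarrow>
        indc_be_step M K f tn H yn Y \<longleftrightarrow>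
          ((\<forall>k\<le>K. Y k 0 = yn) \<and>
           (\<forall>k\<le>K. \<forall>m<M. Y k (Suc m) =
               yn + H * (\<Sum>k'\<le>K. \<Sum>m'<M. A (k * M + m) (k' * M + m') * f (Y k' (Suc m'))))) \<and>
        (indc_be_step M K f tn H yn Y \<longrightarrow>
           Y K M = yn + H * (\<Sum>k'\<le>K. \<Sum>m'<M. b (k' * M + m') * f (Y k' (Suc m'))))"
  proof (intro allI impI)
    fix f :: "real \<Rightarrow> real" and tn H yn :: real and Y :: "nat \<Rightarrow> nat \<Rightarrow> real"
    assume H: "H > 0"
    show "indc_be_step M K f tn H yn Y \<longleftrightarrow>
          ((\<forall>k\<le>K. Y k 0 = yn) \<and>
           (\<forall>k\<le>K. \<forall>m<M. Y k (Suc m) =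
               yn + H * (\<Sum>k'\<le>K. \<Sum>m'<M. A (k * M + m) (k' * M + m') * f (Y k' (Suc m'))))) \<and>
        (indc_be_step M K f tn H yn Y \<longrightarrow>
           Y K M = yn + H * (\<Sum>k'\<le>K. \<Sum>m'<M. b (k' * M + m') * f (Y k' (Suc m'))))"
    proof -
      have "Y K M = yn + H * (\<Sum>k'\<le>K. \<Sum>m'<M. b (k' * M + m') * f (Y k' (Suc m')))"
        if "indc_be_step M K f tn H yn Y"
      proof -
        from that main[OF H] have all: "\<forall>k\<le>K. \<forall>m<M. Y k (Suc m) =
               yn + H * (\<Sum>k'\<le>K. \<Sum>m'<M. A (k * M + m) (k' * M + m') * f (Y k' (Suc m')))"
          by blast
        have "Y K (Suc (M - 1)) =
               yn + H * (\<Sum>k'\<le>K. \<Sum>m'<M. A (K * M + (M - 1)) (k' * M + m') * f (Y k' (Suc m')))"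
          by (rule all[rule_format]) (use M in auto)
        moreover have sM: "Suc (M - 1) = M" using M by simp
        ultimately show ?thesis by (simp only: b_def idx[symmetric] sM)
      qed
      then show ?thesis using main[OF H] by blast
    qed
  qed
  have lower: "Amat M i j = 0" if "i < j" for i j
  proof -
    have kk: "i div M \<le> j div M" using that by (simp add: div_le_mono)
    have c1: "\<not> (j div M = i div M \<and> j mod M \<le> i mod M)"
      using that by (metis div_mult_mod_eq add_le_cancel_left not_le)
    have c2: "\<not> (0 < i div M \<and> j div M = i div M - 1)" using kk by auto
    show ?thesis unfolding Amat_def by (subst if_not_P[OF c1], subst if_not_P[OF c2]) simp
  qed
  have diag: "Amat M i i \<noteq> 0" for i
  proof -
    have "\<not> (0 < i div M \<and> i div M = i div M - 1)" by auto
    then show ?thesis unfolding Amat_def using M by (subst if_not_P) auto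
  qed
  have inv: "mat_invertible ((K + 1) * M) A"
    unfolding A_def by (rule lower_tri_invertible) (use lower diag in auto)
  have blk: "A i j = block_A1 M i j" if "K = 1" "i < 2 * M" "j < 2 * M" for i j
    using that M
    by (cases "i < M"; cases "j < M")
       (simp_all add: A_def Amat_def block_A1_def T_mat_def P_mat_def le_div_geq le_mod_geq)
  show ?thesis
    apply (rule exI[of _ A], rule exI[of _ b])
    using part1 inv blk by (simp add: rk_stiffly_accurate_def b_def)
qed

end
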